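(* If $G\subset\Sigma_n$ does not act isotypically on $\{1,\dots,n\}$, then $|\Pi_n|^G$ is $W_{\Sigma_n}(G)$-equivariantly collapsible.
   Context: $\Pi_n$ is the poset of proper nontrivial partitions of $\{1,\dots,n\}$ ordered by refinement; $|\Pi_n|$ is the realisation of its order complex, with the induced $\Sigma_n$-action, and $|\Pi_n|^G$ its $G$-fixed points with action of $W_{\Sigma_n}(G)=N_{\Sigma_n}(G)/G$. $G$ acts isotypically if all $G$-orbits on $\{1,\dots,n\}$ are isomorphic $G$-sets. Equivariantly collapsible means reducible to a point by finitely many elementary equivariant collapses. *)

theory Defs
  imports "HOL-Algebra.Sym_Groups" "HOL-Algebra.Group_Action" "HOL-Library.Disjoint_Sets"
begin

definition refines :: "nat set set \<Rightarrow> nat set set \<Rightarrow> bool" where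
  "refines P Q \<longleftrightarrow> (\<forall>B\<in>P. \<exists>C\<in>Q. B \<subseteq> C)"

definition Pi_poset :: "nat \<Rightarrow> nat set set set" where
  "Pi_poset n = {P. partition_on {1..n} P \<and> P \<noteq> {{1..n}} \<and> P \<noteq> (\<lambda>i. {i}) ` {1..n}}"

definition perm_part :: "(nat \<Rightarrow> nat) \<Rightarrow> nat set set \<Rightarrow> nat set set" where
  "perm_part g P = (\<lambda>B. g ` B) ` P"

definition perm_simplex :: "(nat \<Rightarrow> nat) \<Rightarrow> nat set set set \<Rightarrow> nat set set set" where
  "perm_simplex g s = perm_part g ` s"

definition is_chain :: "nat set set set \<Rightarrow> bool" where
  "is_chain s \<longleftrightarrow> (\<forall>P\<in>s. \<forall>Q\<in>s. refines P Q \<or> refines Q P)"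

text \<open>The simplicial complex |Pi_n|^G: the fixed points of the order complex of Pi_n, i.e. the
  (nonempty, finite) chains of Pi_n all of whose members are G-fixed (a G-invariant chain is
  fixed pointwise since G acts by order automorphisms).\<close>

definition fixed_order_complex :: "nat \<Rightarrow> (nat \<Rightarrow> nat) set \<Rightarrow> nat set set set set" where
  "fixed_order_complex n G =
     {s. s \<noteq> {} \<and> finite s \<and> s \<subseteq> Pi_poset n \<and> is_chain s \<and>
         (\<forall>g\<in>G. \<forall>P\<in>s. perm_part g P = P)}"

definition perm_orbit :: "(nat \<Rightarrow> nat) set \<Rightarrow> nat \<Rightarrow> nat set" where
  "perm_orbit G i = {g i | g. g \<in> G}"

definition iso_Gsets :: "(nat \<Rightarrow> nat) set \<Rightarrow> nat set \<Rightarrow> nat set \<Rightarrow> bool" where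
  "iso_Gsets G X Y \<longleftrightarrow>
     (\<exists>f. bij_betw f X Y \<and> (\<forall>g\<in>G. \<forall>x\<in>X. f (g x) = g (f x)))"

definition acts_isotypically :: "nat \<Rightarrow> (nat \<Rightarrow> nat) set \<Rightarrow> bool" where
  "acts_isotypically n G \<longleftrightarrow>
     (\<forall>i\<in>{1..n}. \<forall>j\<in>{1..n}. iso_Gsets G (perm_orbit G i) (perm_orbit G j))"

definition weyl_group :: "nat \<Rightarrow> (nat \<Rightarrow> nat) set \<Rightarrow> (nat \<Rightarrow> nat) set monoid" where
  "weyl_group n G =
     ((sym_group n)\<lparr>carrier := normalizer (sym_group n) G\<rparr>) Mod G"

text \<open>W(G)-orbit of a simplex: a coset C in W acts through any of its representatives g in C
  (G acts trivially on the fixed-point complex).\<close>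

definition weyl_orbit :: "nat \<Rightarrow> (nat \<Rightarrow> nat) set \<Rightarrow> nat set set set \<Rightarrow> nat set set set set" where
  "weyl_orbit n G s = {perm_simplex g s | g. \<exists>C\<in>carrier (weyl_group n G). g \<in> C}"

text \<open>Elementary W-equivariant collapse: remove the W-orbits of a free face sigma and of its
  unique proper coface tau (dim tau = dim sigma + 1), where no translate of sigma other than
  sigma itself lies in tau (so the removed pairs are disjoint).\<close>

definition elem_equiv_collapse ::
  "nat \<Rightarrow> (nat \<Rightarrow> nat) set \<Rightarrow> nat set set set set \<Rightarrow> nat set set set set \<Rightarrow> bool" where
  "elem_equiv_collapse n G K K' \<longleftrightarrow>
     (\<exists>\<sigma> \<tau>. \<tau> \<in> K \<and> \<sigma> \<subset> \<tau> \<and> card \<tau> = card \<sigma> + 1 \<and>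
        (\<forall>\<rho>\<in>K. \<sigma> \<subset> \<rho> \<longrightarrow> \<rho> = \<tau>) \<and>
        (\<forall>\<sigma>'\<in>weyl_orbit n G \<sigma>. \<sigma>' \<subseteq> \<tau> \<longrightarrow> \<sigma>' = \<sigma>) \<and>
        K' = K - (weyl_orbit n G \<sigma> \<union> weyl_orbit n G \<tau>))"

definition equiv_collapsible :: "nat \<Rightarrow> (nat \<Rightarrow> nat) set \<Rightarrow> nat set set set set \<Rightarrow> bool" where
  "equiv_collapsible n G K \<longleftrightarrow>
     (\<exists>v. (elem_equiv_collapse n G)\<^sup>*\<^sup>* K {{v}})"

end

theory Submission
  imports Defs "HOL-Algebra.Zassenhaus"
begin


definition cplx :: "('a \<Rightarrow> 'a \<Rightarrow> bool) \<Rightarrow> 'a set \<Rightarrow> 'a set set" where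
  "cplx lr U = {s. s \<noteq> {} \<and> finite s \<and> s \<subseteq> U \<and> (\<forall>x\<in>s. \<forall>y\<in>s. lr x y \<or> lr y x)}"

definition orbF :: "('a \<Rightarrow> 'a) set \<Rightarrow> 'a set \<Rightarrow> 'a set set" where
  "orbF F s = {f ` s | f. f \<in> F}"

definition gstep :: "('a \<Rightarrow> 'a) set \<Rightarrow> 'a set set \<Rightarrow> 'a set set \<Rightarrow> bool" where
  "gstep F K K' \<longleftrightarrow> (\<exists>\<sigma> \<tau>. \<tau> \<in> K \<and> \<sigma> \<subset> \<tau> \<and> card \<tau> = card \<sigma> + 1 \<and>
     (\<forall>\<rho>\<in>K. \<sigma> \<subset> \<rho> \<longrightarrow> \<rho> = \<tau>) \<and> (\<forall>\<sigma>'\<in>orbF F \<sigma>. \<sigma>' \<subseteq> \<tau> \<longrightarrow> \<sigma>' = \<sigma>) \<and>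
     K' = K - (orbF F \<sigma> \<union> orbF F \<tau>))"

locale absF =
  fixes lr :: "'a \<Rightarrow> 'a \<Rightarrow> bool" and U0 :: "'a set" and F :: "('a \<Rightarrow> 'a) set"
  assumes fin: "finite U0"
    and lrefl: "x \<in> U0 \<Longrightarrow> lr x x"
    and ltrans: "x \<in> U0 \<Longrightarrow> y \<in> U0 \<Longrightarrow> z \<in> U0 \<Longrightarrow> lr x y \<Longrightarrow> lr y z \<Longrightarrow> lr x z"
    and lanti: "x \<in> U0 \<Longrightarrow> y \<in> U0 \<Longrightarrow> lr x y \<Longrightarrow> lr y x \<Longrightarrow> x = y"
    and maps: "f \<in> F \<Longrightarrow> x \<in> U0 \<Longrightarrow> f x \<in> U0"
    and injF: "f \<in> F \<Longrightarrow> inj_on f U0"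
    and mono: "f \<in> F \<Longrightarrow> x \<in> U0 \<Longrightarrow> y \<in> U0 \<Longrightarrow> lr x y \<Longrightarrow> lr (f x) (f y)"
    and idF: "id \<in> F"
    and compF: "f \<in> F \<Longrightarrow> h \<in> F \<Longrightarrow> \<exists>k\<in>F. \<forall>x\<in>U0. k x = f (h x)"
    and invF: "f \<in> F \<Longrightarrow> \<exists>k\<in>F. \<forall>x\<in>U0. k (f x) = x"
begin

lemma no_comp:
  assumes f: "f \<in> F" and x: "x \<in> U0" and c: "lr x (f x) \<or> lr (f x) x"
  shows "f x = x"
  using c
proof
  assume a: "lr x (f x)"
  define up where "up = {y\<in>U0. lr x y}"
  have fx: "f x \<in> U0" using maps f x by auto
  have sub: "f ` up \<subseteq> up"
  proof
    fix z assume "z \<in> f ` up"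
    then obtain y where y: "y \<in> up" "z = f y" by auto
    have "lr (f x) (f y)" using mono[OF f x] y by (auto simp: up_def)
    then show "z \<in> up" using y a ltrans[OF x fx] maps[OF f] by (auto simp: up_def)
  qed
  have fu: "finite up" using fin by (auto simp: up_def)
  have "card (f ` up) = card up"
    using card_image injF[OF f] by (metis (no_types, lifting) inj_on_subset mem_Collect_eq subsetI up_def)
  then have "f ` up = up" using card_subset_eq[OF fu sub] by auto
  moreover have "x \<in> up" using x lrefl by (auto simp: up_def)
  ultimately obtain y where y: "y \<in> up" "x = f y" by (metis imageE)
  then have "lr (f x) x" using mono[OF f x] by (auto simp: up_def)
  then show ?thesis using lanti[OF fx x] a by auto
next
  assume a: "lr (f x) x"
  define dn where "dn = {y\<in>U0. lr y x}"
  have fx: "f x \<in> U0" using maps f x by auto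
  have sub: "f ` dn \<subseteq> dn"
  proof
    fix z assume "z \<in> f ` dn"
    then obtain y where y: "y \<in> dn" "z = f y" by auto
    have "lr (f y) (f x)" using mono[OF f _ x] y by (auto simp: dn_def)
    then show "z \<in> dn" using y a ltrans[OF _ fx x] maps[OF f] by (auto simp: dn_def)
  qed
  have fu: "finite dn" using fin by (auto simp: dn_def)
  have "card (f ` dn) = card dn"
    using card_image injF[OF f] by (metis (no_types, lifting) inj_on_subset mem_Collect_eq subsetI dn_def)
  then have "f ` dn = dn" using card_subset_eq[OF fu sub] by auto
  moreover have "x \<in> dn" using x lrefl by (auto simp: dn_def)
  ultimately obtain y where y: "y \<in> dn" "x = f y" by (metis imageE)
  then have "lr x (f x)" using mono[OF f _ x] by (auto simp: dn_def)
  then show ?thesis using lanti[OF fx x] a by auto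
qed

lemma orbit_cmp:
  assumes "f \<in> F" "h \<in> F" "v \<in> U0" "lr (f v) (h v) \<or> lr (h v) (f v)"
  shows "f v = h v"
proof -
  obtain f' where f': "f' \<in> F" "\<forall>x\<in>U0. f' (f x) = x" using invF assms(1) by blast
  obtain k where k: "k \<in> F" "\<forall>x\<in>U0. k x = h (f' x)" using compF[OF assms(2) f'(1)] by blast
  have fv: "f v \<in> U0" using maps assms by auto
  have "k (f v) = h v" using k f' fv assms(3) by auto
  then show ?thesis using no_comp[OF k(1) fv] assms(4) by auto
qed

lemma comp_orbit:
  assumes "f \<in> F" "h \<in> F" "v \<in> U0"
  shows "\<exists>k\<in>F. k v = h (f v)"
  using compF[OF assms(2,1)] assms(3) by blast

lemma remove_orbit:
  assumes U: "U \<subseteq> U0" "\<forall>f\<in>F. \<forall>x\<in>U. f x \<in> U"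
    and v: "v \<in> U" and c: "c \<in> U" "c \<noteq> v" "lr c v \<or> lr v c"
    and phi1: "c = \<phi> v" and phi2: "\<forall>f\<in>F. \<forall>g\<in>F. f (\<phi> (g v)) = \<phi> (f (g v))"
    and link: "\<forall>q\<in>U. (lr q v \<or> lr v q) \<longrightarrow> (lr q c \<or> lr c q)"
  shows "(gstep F)\<^sup>*\<^sup>* (cplx lr U) (cplx lr (U - {f v | f. f \<in> F}))"
proof -
  define Ov where "Ov = {f v | f. f \<in> F}"
  define T where "T = cplx lr (U - Ov)"
  have vU0: "v \<in> U0" and cU0: "c \<in> U0" using U v c by auto
  have gc: "g c = \<phi> (g v)" if "g \<in> F" for g
    using phi2 idF that phi1 by (metis id_apply)
  have gcU: "g c \<in> U" if "g \<in> F" for g using U c that by auto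
  have gvU: "g v \<in> U" if "g \<in> F" for g using U v that by auto
  have Ov_cmp: "x = y" if "x \<in> Ov" "y \<in> Ov" "lr x y \<or> lr y x" for x y
    using that orbit_cmp vU0 unfolding Ov_def by blast
  have hfv_Ov: "h (f v) \<in> Ov" if "h \<in> F" "f \<in> F" for h f
    using comp_orbit[OF that(2,1) vU0] unfolding Ov_def by (metis (mono_tags, lifting) mem_Collect_eq)
  have fvc: "f v \<noteq> f c" if "f \<in> F" for f
    using injF[OF that] vU0 cU0 c(2) by (metis inj_on_contraD)
  have finC: "finite (cplx lr U)"
  proof (rule finite_subset)
    show "cplx lr U \<subseteq> Pow U" by (auto simp: cplx_def)
    show "finite (Pow U)" using fin U finite_subset by auto
  qed
  have main: "finite K \<Longrightarrow> T \<subseteq> K \<Longrightarrow> K \<subseteq> cplx lr U \<Longrightarrow> (\<forall>s\<in>K. \<forall>g\<in>F. g v \<in> s \<longrightarrow> insert (g c) s \<in> K)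
     \<Longrightarrow> (gstep F)\<^sup>*\<^sup>* K T" for K
  proof (induction K rule: finite_psubset_induct)
    case (psubset K)
    note IH = psubset.IH and KT = psubset.prems(1) and KC = psubset.prems(2) and I2 = psubset.prems(3)
    define B where "B = {s\<in>K. s \<inter> Ov \<noteq> {}}"
    show ?case
    proof (cases "B = {}")
      case True
      have "K \<subseteq> T"
      proof
        fix s assume s: "s \<in> K"
        then have "s \<inter> Ov = {}" using True B_def by auto
        moreover have "s \<in> cplx lr U" using KC s by auto
        ultimately show "s \<in> T" unfolding T_def cplx_def by blast
      qed
      then have "K = T" using KT by auto
      then show ?thesis by simp
    next
      case False
      have "finite B" using psubset.hyps B_def by auto
      then obtain \<tau> where \<tau>B: "\<tau> \<in> B" and \<tau>max: "\<forall>\<rho>\<in>B. \<tau> \<subseteq> \<rho> \<longrightarrow> \<rho> = \<tau>"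
        using finite_has_maximal False by metis
      have \<tau>K: "\<tau> \<in> K" using \<tau>B B_def by auto
      have \<tau>C: "\<tau> \<in> cplx lr U" using \<tau>K KC by auto
      obtain f where f: "f \<in> F" "f v \<in> \<tau>" using \<tau>B B_def Ov_def by auto
      have "insert (f c) \<tau> \<in> B" using I2 \<tau>K f B_def \<tau>B by auto
      then have fc\<tau>: "f c \<in> \<tau>" using \<tau>max by auto
      define \<sigma> where "\<sigma> = \<tau> - {f c}"
      have fv\<sigma>: "f v \<in> \<sigma>" using f fvc \<sigma>_def by auto
      have \<tau>\<sigma>: "\<tau> = insert (f c) \<sigma>" "f c \<notin> \<sigma>" using fc\<tau> \<sigma>_def by auto
      have fin\<tau>: "finite \<tau>" using \<tau>C unfolding cplx_def by auto
      have \<tau>U0: "\<tau> \<subseteq> U0" using \<tau>C U(1) unfolding cplx_def by auto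
      have chain\<tau>: "\<forall>x\<in>\<tau>. \<forall>y\<in>\<tau>. lr x y \<or> lr y x" using \<tau>C unfolding cplx_def by auto
      define K' where "K' = K - (orbF F \<sigma> \<union> orbF F \<tau>)"
      have hfc: "h (f c) = f c" if h: "h \<in> F" "h (f v) = f v" for h
      proof -
        have "h (f c) = h (\<phi> (f v))" using gc f by simp
        also have "\<dots> = \<phi> (h (f v))" using phi2 h f by auto
        also have "\<dots> = f c" using h gc f by simp
        finally show ?thesis .
      qed
      have hfc_notin: "h (f c) \<notin> h ` \<sigma>" if h: "h \<in> F" for h
      proof
        assume "h (f c) \<in> h ` \<sigma>"
        then obtain y where y: "y \<in> \<sigma>" "h y = h (f c)" by auto
        have "y \<in> U0" "f c \<in> U0" using y \<tau>U0 \<tau>\<sigma> fc\<tau> by auto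
        then have "y = f c" using injF[OF h] y by (meson inj_onD)
        then show False using y \<tau>\<sigma> by auto
      qed
      have step: "gstep F K K'"
        unfolding gstep_def
      proof (intro exI conjI)
        show "\<tau> \<in> K" by (rule \<tau>K)
        show "\<sigma> \<subset> \<tau>" using \<tau>\<sigma> by auto
        show "card \<tau> = card \<sigma> + 1" using \<tau>\<sigma> fin\<tau> by auto
        show "\<forall>\<rho>\<in>K. \<sigma> \<subset> \<rho> \<longrightarrow> \<rho> = \<tau>"
        proof (intro ballI impI)
          fix \<rho> assume \<rho>: "\<rho> \<in> K" "\<sigma> \<subset> \<rho>"
          have "f v \<in> \<rho>" using \<rho> fv\<sigma> by auto
          then have "insert (f c) \<rho> \<in> K" using I2 \<rho> f by auto
          moreover have "f v \<in> Ov" using f Ov_def by auto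
          ultimately have "insert (f c) \<rho> \<in> B" using B_def \<open>f v \<in> \<rho>\<close> by auto
          moreover have "\<tau> \<subseteq> insert (f c) \<rho>" using \<tau>\<sigma> \<rho> by auto
          ultimately have "insert (f c) \<rho> = \<tau>" using \<tau>max by auto
          then have "\<rho> \<subseteq> insert (f c) \<sigma>" using \<tau>\<sigma> by auto
          moreover obtain x where "x \<in> \<rho>" "x \<notin> \<sigma>" using \<rho>(2) by auto
          ultimately have "f c \<in> \<rho>" by auto
          then show "\<rho> = \<tau>" using \<rho>(2) \<tau>\<sigma> \<open>\<rho> \<subseteq> insert (f c) \<sigma>\<close> by auto
        qed
        show "\<forall>\<sigma>'\<in>orbF F \<sigma>. \<sigma>' \<subseteq> \<tau> \<longrightarrow> \<sigma>' = \<sigma>"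
        proof (intro ballI impI)
          fix \<sigma>' assume s': "\<sigma>' \<in> orbF F \<sigma>" "\<sigma>' \<subseteq> \<tau>"
          then obtain h where h: "h \<in> F" "\<sigma>' = h ` \<sigma>" by (auto simp: orbF_def)
          have "h (f v) \<in> \<tau>" using s' h fv\<sigma> by blast
          moreover have "f v \<in> \<tau>" using f(2) .
          ultimately have "lr (h (f v)) (f v) \<or> lr (f v) (h (f v))" using chain\<tau> by blast
          moreover have "f v \<in> U0" using f(2) \<tau>U0 by blast
          ultimately have hfv: "h (f v) = f v" using no_comp[OF h(1)] by blast
          have "f c \<notin> h ` \<sigma>" using hfc_notin[OF h(1)] hfc[OF h(1) hfv] by auto
          moreover have "h ` \<sigma> \<subseteq> insert (f c) \<sigma>" using s' h \<tau>\<sigma> by auto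
          ultimately have "h ` \<sigma> \<subseteq> \<sigma>" by (simp add: subset_insert)
          moreover have "card (h ` \<sigma>) = card \<sigma>"
          proof -
            have "\<sigma> \<subseteq> U0" using \<tau>U0 \<tau>\<sigma> by auto
            then have "inj_on h \<sigma>" using injF[OF h(1)] inj_on_subset by blast
            then show ?thesis by (rule card_image)
          qed
          moreover have "finite \<sigma>" using fin\<tau> \<sigma>_def by simp
          ultimately show "\<sigma>' = \<sigma>" using h(2) card_subset_eq[of \<sigma> "h ` \<sigma>"] by simp
        qed
        show "K' = K - (orbF F \<sigma> \<union> orbF F \<tau>)" by (rule K'_def)
      qed
      have "\<tau> = id ` \<tau>" by simp
      then have "\<tau> \<in> orbF F \<tau>" unfolding orbF_def using idF by blast
      then have KK: "K' \<subset> K" using K'_def \<tau>K by auto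
      have TK: "T \<subseteq> K'"
      proof
        fix x assume x: "x \<in> T"
        have "x \<notin> orbF F \<sigma> \<union> orbF F \<tau>"
        proof
          assume "x \<in> orbF F \<sigma> \<union> orbF F \<tau>"
          then obtain h where h: "h \<in> F" "x = h ` \<sigma> \<or> x = h ` \<tau>" by (auto simp: orbF_def)
          then have "h (f v) \<in> x" using fv\<sigma> \<tau>\<sigma> by auto
          moreover have "h (f v) \<in> Ov" using hfv_Ov h f by auto
          moreover have "x \<subseteq> U - Ov" using x unfolding T_def cplx_def by blast
          ultimately show False by blast
        qed
        then show "x \<in> K'" using x KT K'_def by auto
      qed
      have KC': "K' \<subseteq> cplx lr U" using K'_def KC by auto
      have I2': "\<forall>s\<in>K'. \<forall>g\<in>F. g v \<in> s \<longrightarrow> insert (g c) s \<in> K'"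
      proof (intro ballI impI)
        fix s g assume s: "s \<in> K'" and g: "g \<in> F" and gv: "g v \<in> s"
        have sK: "s \<in> K" using s K'_def by auto
        have ins: "insert (g c) s \<in> K" using I2 sK g gv by auto
        have insC: "insert (g c) s \<in> cplx lr U" using ins KC by auto
        have sno: "s \<notin> orbF F \<sigma> \<union> orbF F \<tau>" using s K'_def by auto
        show "insert (g c) s \<in> K'"
        proof (rule ccontr)
          assume "insert (g c) s \<notin> K'"
          then have "insert (g c) s \<in> orbF F \<sigma> \<union> orbF F \<tau>" using ins K'_def by auto
          then obtain h where h: "h \<in> F" "insert (g c) s = h ` \<sigma> \<or> insert (g c) s = h ` \<tau>"
            by (auto simp: orbF_def)
          have hfv_in: "h (f v) \<in> insert (g c) s" using h fv\<sigma> \<tau>\<sigma> by auto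
          have "lr (g v) (h (f v)) \<or> lr (h (f v)) (g v)"
            using insC hfv_in gv unfolding cplx_def by auto
          moreover have "g v \<in> Ov" using g Ov_def by auto
          ultimately have eqv: "g v = h (f v)"
            using Ov_cmp hfv_Ov[OF h(1) f(1)] by blast
          have eqc: "g c = h (f c)"
          proof -
            have "g c = \<phi> (g v)" using gc g by simp
            also have "\<dots> = \<phi> (h (f v))" using eqv by simp
            also have "\<dots> = h (\<phi> (f v))" using phi2 h f by auto
            also have "\<dots> = h (f c)" using gc f by simp
            finally show ?thesis .
          qed
          show False
            using h(2)
          proof
            assume "insert (g c) s = h ` \<sigma>"
            then show False using eqc hfc_notin[OF h(1)] by auto
          next
            assume a: "insert (g c) s = h ` \<tau>"
            have "h ` \<tau> = insert (h (f c)) (h ` \<sigma>)" using \<tau>\<sigma> by auto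
            then have e: "insert (h (f c)) s = insert (h (f c)) (h ` \<sigma>)" using a eqc by simp
            have "h (f c) \<notin> h ` \<sigma>" by (rule hfc_notin[OF h(1)])
            have "s - {h (f c)} = insert (h (f c)) s - {h (f c)}" by simp
            also have "\<dots> = h ` \<sigma>" using e \<open>h (f c) \<notin> h ` \<sigma>\<close> by simp
            finally have "s - {h (f c)} = h ` \<sigma>" .
            then have "s = h ` \<sigma> \<or> s = insert (h (f c)) (h ` \<sigma>)" by (cases "h (f c) \<in> s") auto
            then have "s = h ` \<sigma> \<or> s = h ` \<tau>" using \<open>h ` \<tau> = insert (h (f c)) (h ` \<sigma>)\<close> by simp
            then show False using sno h(1) unfolding orbF_def by auto
          qed
        qed
      qed
      have "(gstep F)\<^sup>*\<^sup>* K' T" by (rule IH[OF KK TK KC' I2'])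
      then show ?thesis using step by (meson converse_rtranclp_into_rtranclp)
    qed
  qed
  have "(gstep F)\<^sup>*\<^sup>* (cplx lr U) T"
  proof (rule main)
    show "T \<subseteq> cplx lr U" unfolding T_def cplx_def by auto
    show "\<forall>s\<in>cplx lr U. \<forall>g\<in>F. g v \<in> s \<longrightarrow> insert (g c) s \<in> cplx lr U"
    proof (intro ballI impI)
      fix s g assume s: "s \<in> cplx lr U" and g: "g \<in> F" and gv: "g v \<in> s"
      obtain g' where g': "g' \<in> F" "\<forall>x\<in>U0. g' (g x) = x" using invF g by blast
      have cm: "lr q (g c) \<or> lr (g c) q" if q: "q \<in> s" for q
      proof -
        have qU: "q \<in> U" using s q by (auto simp: cplx_def)
        then have qU0: "q \<in> U0" using U by auto
        have "lr q (g v) \<or> lr (g v) q" using s q gv by (auto simp: cplx_def)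
        then have "lr (g' q) (g' (g v)) \<or> lr (g' (g v)) (g' q)"
          using mono[OF g'(1)] qU0 gvU[OF g] U by blast
        then have "lr (g' q) v \<or> lr v (g' q)" using g'(2) vU0 by auto
        then have "lr (g' q) c \<or> lr c (g' q)" using link U(2) g'(1) qU by auto
        then have "lr (g (g' q)) (g c) \<or> lr (g c) (g (g' q))"
          using mono[OF g] cU0 maps[OF g'(1) qU0] by blast
        moreover have "g (g' q) = q"
        proof -
          have "g' (g (g' q)) = g' q" using g'(2) maps[OF g'(1) qU0] by auto
          moreover have "g' q = g' (g (g' q))" by (simp add: calculation)
          have "g (g' q) \<in> U0" using maps g g'(1) qU0 by auto
          then show ?thesis using injF[OF g'(1)] qU0 \<open>g' (g (g' q)) = g' q\<close>
            by (meson inj_onD)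
        qed
        ultimately show ?thesis by simp
      qed
      show "insert (g c) s \<in> cplx lr U"
        using s cm gcU[OF g] lrefl maps[OF g cU0] unfolding cplx_def by auto
    qed
    show "finite (cplx lr U)" by (rule finC)
  qed (use finC in auto)
  then show ?thesis unfolding T_def Ov_def .
qed

lemma collapse_all:
  assumes P0: "P0 \<in> U0" "\<forall>f\<in>F. f P0 = P0"
    and meet: "\<And>x. x \<in> U0 \<Longrightarrow> \<not> lr x P0 \<Longrightarrow> \<phi> x \<in> U0 \<and> lr (\<phi> x) x \<and> lr (\<phi> x) P0 \<and>
                  (\<forall>y\<in>U0. lr y x \<longrightarrow> lr y P0 \<longrightarrow> lr y (\<phi> x))"
    and eqv: "\<And>f x. f \<in> F \<Longrightarrow> x \<in> U0 \<Longrightarrow> \<not> lr x P0 \<Longrightarrow> f (\<phi> x) = \<phi> (f x)"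
  shows "(gstep F)\<^sup>*\<^sup>* (cplx lr U0) {{P0}}"
proof -
  have bad_pres: "\<not> lr (f x) P0" if H: "f \<in> F" "x \<in> U0" "\<not> lr x P0" for f x
  proof
    assume a: "lr (f x) P0"
    obtain k where k: "k \<in> F" "\<forall>y\<in>U0. k (f y) = y" using invF H(1) by blast
    have "lr (k (f x)) (k P0)" using mono[OF k(1) _ P0(1) a] maps[OF H(1,2)] by blast
    then show False using k H P0 by auto
  qed
  have inv_orbit: "\<exists>k\<in>F. x = k v" if H: "f \<in> F" "x \<in> U0" "h \<in> F" "v \<in> U0" "f x = h v" for f x h v
  proof -
    obtain k where k: "k \<in> F" "\<forall>y\<in>U0. k (f y) = y" using invF H(1) by blast
    obtain k' where k': "k' \<in> F" "\<forall>y\<in>U0. k' y = k (h y)" using compF[OF k(1) H(3)] by blast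
    have "x = k (f x)" using k(2) H(2) by auto
    then have "x = k (h v)" using H(5) by simp
    then have "x = k' v" using k' H(4) by auto
    then show ?thesis using k'(1) by blast
  qed
  have P0notO: "f v \<noteq> P0" if H: "f \<in> F" "v \<in> U0" "v \<noteq> P0" for f v
  proof
    assume a: "f v = P0"
    obtain k where k: "k \<in> F" "\<forall>y\<in>U0. k (f y) = y" using invF H(1) by blast
    have "v = k (f v)" using k(2) H(2) by auto
    then have "v = k P0" using a by simp
    then show False using P0 k H by auto
  qed
  have main: "U \<subseteq> U0 \<Longrightarrow> P0 \<in> U \<Longrightarrow> (\<forall>f\<in>F. \<forall>x\<in>U. f x \<in> U) \<Longrightarrow>
      ((\<exists>x\<in>U. \<not> lr x P0) \<longrightarrow> {x\<in>U0. lr x P0} \<subseteq> U) \<Longrightarrow> (gstep F)\<^sup>*\<^sup>* (cplx lr U) {{P0}}" for U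
  proof (induction "card U" arbitrary: U rule: less_induct)
    case less
    have UU0: "U \<subseteq> U0" and P0U: "P0 \<in> U" and Uinv: "\<forall>f\<in>F. \<forall>x\<in>U. f x \<in> U"
      and Ugood: "(\<exists>x\<in>U. \<not> lr x P0) \<longrightarrow> {x\<in>U0. lr x P0} \<subseteq> U" using less.prems by auto
    have finU: "finite U" using UU0 fin finite_subset by auto
    have fin_step: "(gstep F)\<^sup>*\<^sup>* (cplx lr U) {{P0}}"
      if v: "v \<in> U" "v \<noteq> P0" and r: "(gstep F)\<^sup>*\<^sup>* (cplx lr U) (cplx lr (U - {f v | f. f \<in> F}))"
        and inv4: "(\<exists>x\<in>U - {f v | f. f \<in> F}. \<not> lr x P0) \<longrightarrow> {x\<in>U0. lr x P0} \<subseteq> U - {f v | f. f \<in> F}"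
      for v
    proof -
      define U' where "U' = U - {f v | f. f \<in> F}"
      have vU0: "v \<in> U0" using v UU0 by auto
      have "v = id v" by simp
      then have "v \<in> {f v | f. f \<in> F}" using idF by blast
      then have "U' \<subset> U" using v U'_def by auto
      then have cardlt: "card U' < card U" using finU psubset_card_mono by auto
      have "U' \<subseteq> U0" using U'_def UU0 by auto
      moreover have "P0 \<in> U'" using U'_def P0U P0notO[OF _ vU0 v(2)] by auto
      moreover have "\<forall>f\<in>F. \<forall>x\<in>U'. f x \<in> U'"
      proof (intro ballI)
        fix f x assume f: "f \<in> F" and x: "x \<in> U'"
        have "f x \<in> U" using Uinv f x U'_def by auto
        moreover have "f x \<notin> {f v | f. f \<in> F}"
        proof
          assume "f x \<in> {f v | f. f \<in> F}"
          then obtain h where h: "h \<in> F" "f x = h v" by auto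
          have "x \<in> U0" using x U'_def UU0 by auto
          then obtain k where "k \<in> F" "x = k v" using inv_orbit[OF f _ h(1) vU0 h(2)] by blast
          then show False using x U'_def by auto
        qed
        ultimately show "f x \<in> U'" using U'_def by auto
      qed
      moreover have "(\<exists>x\<in>U'. \<not> lr x P0) \<longrightarrow> {x\<in>U0. lr x P0} \<subseteq> U'" using inv4 U'_def by auto
      ultimately have "(gstep F)\<^sup>*\<^sup>* (cplx lr U') {{P0}}" using less.hyps[OF cardlt] by blast
      then show ?thesis using rtranclp_trans[OF r[folded U'_def]] by blast
    qed
    show ?case
    proof (cases "U = {P0}")
      case True
      have "cplx lr U = {{P0}}"
      proof
        show "cplx lr U \<subseteq> {{P0}}" using True unfolding cplx_def by auto
        show "{{P0}} \<subseteq> cplx lr U" using True lrefl P0 unfolding cplx_def by auto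
      qed
      then show ?thesis by simp
    next
      case False
      then obtain v0 where v0: "v0 \<in> U" "v0 \<noteq> P0" using P0U by auto
      show ?thesis
      proof (cases "\<exists>x\<in>U. \<not> lr x P0")
        case True
        define bad where "bad = (\<lambda>x. x \<in> U \<and> \<not> lr x P0)"
        define dn where "dn = (\<lambda>x. card {y\<in>U. lr y x})"
        obtain x0 where "bad x0" using True bad_def by auto
        then obtain v where vb: "bad v" and vmin: "\<forall>y. bad y \<longrightarrow> dn v \<le> dn y"
          using ex_has_least_nat[of bad x0 dn] by blast
        have vU: "v \<in> U" and vbad: "\<not> lr v P0" using vb bad_def by auto
        have vU0: "v \<in> U0" using vU UU0 by auto
        have minimal: "lr q P0" if q: "q \<in> U" "lr q v" "q \<noteq> v" for q
        proof (rule ccontr)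
          assume nq: "\<not> lr q P0"
          have qU0: "q \<in> U0" using q UU0 by auto
          have "{y\<in>U. lr y q} \<subset> {y\<in>U. lr y v}"
          proof
            show "{y\<in>U. lr y q} \<subseteq> {y\<in>U. lr y v}" using ltrans[OF _ qU0 vU0] q(2) UU0 by auto
            have "v \<notin> {y\<in>U. lr y q}" using lanti[OF qU0 vU0] q by auto
            then show "{y\<in>U. lr y q} \<noteq> {y\<in>U. lr y v}" using vU lrefl[OF vU0] by auto
          qed
          then have "dn q < dn v" unfolding dn_def using finU psubset_card_mono by (metis (no_types, lifting) finite_subset mem_Collect_eq subsetI)
          moreover have "dn v \<le> dn q" using vmin bad_def q nq by auto
          ultimately show False by auto
        qed
        obtain mv where mv: "mv = \<phi> v" by simp
        have m: "\<phi> v \<in> U0" "lr (\<phi> v) v" "lr (\<phi> v) P0" "\<forall>y\<in>U0. lr y v \<longrightarrow> lr y P0 \<longrightarrow> lr y (\<phi> v)"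
          using meet[OF vU0 vbad] by auto
        have cU: "\<phi> v \<in> U" using Ugood True m by auto
        have cv: "\<phi> v \<noteq> v" using m vbad by auto
        have r: "(gstep F)\<^sup>*\<^sup>* (cplx lr U) (cplx lr (U - {f v | f. f \<in> F}))"
        proof (rule remove_orbit[of U v "\<phi> v" \<phi>])
          show "U \<subseteq> U0" by (rule UU0)
          show "\<forall>f\<in>F. \<forall>x\<in>U. f x \<in> U" by (rule Uinv)
          show "v \<in> U" by (rule vU)
          show "\<phi> v \<in> U" by (rule cU)
          show "\<phi> v \<noteq> v" by (rule cv)
          show "lr (\<phi> v) v \<or> lr v (\<phi> v)" using m by auto
          show "\<phi> v = \<phi> v" by simp
          show "\<forall>f\<in>F. \<forall>g\<in>F. f (\<phi> (g v)) = \<phi> (f (g v))"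
            using eqv bad_pres maps vU0 vbad by blast
          show "\<forall>q\<in>U. (lr q v \<or> lr v q) \<longrightarrow> (lr q (\<phi> v) \<or> lr (\<phi> v) q)"
          proof (intro ballI impI)
            fix q assume q: "q \<in> U" "lr q v \<or> lr v q"
            have qU0: "q \<in> U0" using q UU0 by auto
            show "lr q (\<phi> v) \<or> lr (\<phi> v) q"
            proof (cases "lr v q")
              case True
              then show ?thesis using ltrans[OF m(1) vU0 qU0] m(2) by auto
            next
              case False
              then have "lr q v" "q \<noteq> v" using q lrefl[OF vU0] by auto
              then show ?thesis using minimal[OF q(1)] m(4) qU0 by auto
            qed
          qed
        qed
        have "{x\<in>U0. lr x P0} \<subseteq> U - {f v | f. f \<in> F}"
        proof
          fix x assume x: "x \<in> {x\<in>U0. lr x P0}"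
          then have "x \<in> U" using Ugood True by auto
          moreover have "x \<notin> {f v | f. f \<in> F}" using bad_pres[OF _ vU0 vbad] x by auto
          ultimately show "x \<in> U - {f v | f. f \<in> F}" by auto
        qed
        moreover have "v \<noteq> P0" using vbad lrefl P0(1) by auto
        ultimately show ?thesis using fin_step[OF vU _ r] by blast
      next
        case False
        have r: "(gstep F)\<^sup>*\<^sup>* (cplx lr U) (cplx lr (U - {f v0 | f. f \<in> F}))"
        proof (rule remove_orbit[of U v0 P0 "\<lambda>_. P0"])
          show "U \<subseteq> U0" by (rule UU0)
          show "\<forall>f\<in>F. \<forall>x\<in>U. f x \<in> U" by (rule Uinv)
          show "v0 \<in> U" by (rule v0(1))
          show "P0 \<in> U" by (rule P0U)
          show "P0 \<noteq> v0" using v0 by auto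
          show "lr P0 v0 \<or> lr v0 P0" using False v0 by auto
          show "P0 = (\<lambda>_. P0) v0" by simp
          show "\<forall>f\<in>F. \<forall>g\<in>F. f ((\<lambda>_. P0) (g v0)) = (\<lambda>_. P0) (f (g v0))" using P0 by auto
          show "\<forall>q\<in>U. (lr q v0 \<or> lr v0 q) \<longrightarrow> (lr q P0 \<or> lr P0 q)" using False by auto
        qed
        show ?thesis using fin_step[OF v0 r] False by auto
      qed
    qed
  qed
  show ?thesis
    by (rule main) (use P0 maps in auto)
qed

end


lemma G_facts:
  assumes "subgroup G (sym_group n)"
  shows "id \<in> G" and "\<And>g h. g \<in> G \<Longrightarrow> h \<in> G \<Longrightarrow> g \<circ> h \<in> G"
    and "\<And>g. g \<in> G \<Longrightarrow> inv' g \<in> G" and "\<And>g. g \<in> G \<Longrightarrow> g permutes {1..n}"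
proof -
  interpret subgroup G "sym_group n" by (rule assms)
  show "id \<in> G" using one_closed by (simp add: sym_group_one)
  show "\<And>g h. g \<in> G \<Longrightarrow> h \<in> G \<Longrightarrow> g \<circ> h \<in> G" using m_closed by (simp add: sym_group_mult)
  show "\<And>g. g \<in> G \<Longrightarrow> g permutes {1..n}" using subset sym_group_carrier by blast
  show "\<And>g. g \<in> G \<Longrightarrow> inv' g \<in> G"
    using m_inv_closed sym_group_inv_equality subset by fastforce
qed

lemma normalizer_facts:
  assumes "subgroup G (sym_group n)"
  shows "subgroup (normalizer (sym_group n) G) (sym_group n)"
    and "G \<subseteq> normalizer (sym_group n) G"
    and "\<And>g h. g \<in> normalizer (sym_group n) G \<Longrightarrow> h \<in> G \<Longrightarrow> g \<circ> h \<circ> inv' g \<in> G"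
proof -
  interpret group "sym_group n" by (rule sym_group_is_group)
  show NS: "subgroup (normalizer (sym_group n) G) (sym_group n)"
    using normalizer_imp_subgroup assms subgroup.subset by blast
  have "normal G ((sym_group n)\<lparr>carrier := normalizer (sym_group n) G\<rparr>)"
    using subgroup_in_normalizer assms by blast
  then show "G \<subseteq> normalizer (sym_group n) G"
    using normal_imp_subgroup subgroup.subset by fastforce
  show "\<And>g h. g \<in> normalizer (sym_group n) G \<Longrightarrow> h \<in> G \<Longrightarrow> g \<circ> h \<circ> inv' g \<in> G"
  proof -
    fix g h assume g: "g \<in> normalizer (sym_group n) G" and h: "h \<in> G"
    have gc: "g \<in> carrier (sym_group n)" using g NS subgroup.subset by blast
    have Gsub: "G \<subseteq> carrier (sym_group n)" using assms subgroup.subset by blast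
    have "g <#\<^bsub>sym_group n\<^esub> G #>\<^bsub>sym_group n\<^esub> inv\<^bsub>sym_group n\<^esub> g = G"
      using g Gsub unfolding normalizer_def stabilizer_def by auto
    then have "g <#\<^bsub>sym_group n\<^esub> G #>\<^bsub>sym_group n\<^esub> inv' g = G" using gc by simp
    then show "g \<circ> h \<circ> inv' g \<in> G" using h
      unfolding l_coset_def r_coset_def by (auto simp: sym_group_mult)
  qed
qed


lemma weyl_elems:
  assumes "subgroup G (sym_group n)"
  shows "{g. \<exists>C\<in>carrier (weyl_group n G). g \<in> C} = normalizer (sym_group n) G"
proof -
  define N where "N = normalizer (sym_group n) G"
  have NS: "subgroup N (sym_group n)" and GN: "G \<subseteq> N" unfolding N_def using normalizer_facts[OF assms] by auto
  have m: "monoid.mult (sym_group n\<lparr>carrier := N\<rparr>) = (\<circ>)" by (simp add: sym_group_def)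
  have rc: "r_coset (sym_group n\<lparr>carrier := N\<rparr>) G x = {h \<circ> x | h. h \<in> G}" for x
    unfolding r_coset_def m by blast
  have car: "carrier (weyl_group n G) = (\<lambda>x. {h \<circ> x | h. h \<in> G}) ` N"
    unfolding weyl_group_def carrier_FactGroup N_def[symmetric] rc by simp
  show ?thesis
  proof (rule equalityI)
    show "{g. \<exists>C\<in>carrier (weyl_group n G). g \<in> C} \<subseteq> normalizer (sym_group n) G"
    proof
      fix g assume "g \<in> {g. \<exists>C\<in>carrier (weyl_group n G). g \<in> C}"
      then obtain x h where "x \<in> N" "h \<in> G" "g = h \<circ> x" unfolding car by blast
      then show "g \<in> normalizer (sym_group n) G" using G_facts(2)[OF NS] GN N_def by blast
    qed
    show "normalizer (sym_group n) G \<subseteq> {g. \<exists>C\<in>carrier (weyl_group n G). g \<in> C}"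
    proof
      fix g assume g: "g \<in> normalizer (sym_group n) G"
      have "id \<circ> g \<in> {h \<circ> g | h. h \<in> G}" using G_facts(1)[OF assms] by blast
      then have Y: "g \<in> {h \<circ> g | h. h \<in> G}" by simp
      have X: "{h \<circ> g | h. h \<in> G} \<in> carrier (weyl_group n G)" 
        unfolding car N_def using imageI[of g _ "\<lambda>x. {h \<circ> x | h. h \<in> G}"] g by simp
      show "g \<in> {g. \<exists>C\<in>carrier (weyl_group n G). g \<in> C}"
        apply (rule CollectI) apply (rule bexI[where x="{h \<circ> g | h. h \<in> G}"]) apply (rule Y) apply (rule X) done
    qed
  qed
qed


lemma perm_part_id: "perm_part id = id"
  by (rule ext) (simp add: perm_part_def)

lemma perm_part_comp: "perm_part (f \<circ> g) P = perm_part f (perm_part g P)"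
proof -
  have "perm_part f (perm_part g P) = (\<lambda>B. f ` (g ` B)) ` P"
    unfolding perm_part_def by (rule image_image)
  also have "\<dots> = (\<lambda>B. (f \<circ> g) ` B) ` P"
    by (rule image_cong) (rule refl, rule image_comp)
  finally have X: "perm_part f (perm_part g P) = (\<lambda>B. (f \<circ> g) ` B) ` P" .
  show ?thesis unfolding X by (simp only: perm_part_def)
qed

lemma perm_part_inv: "g permutes S \<Longrightarrow> perm_part (inv' g) (perm_part g P) = P"
proof -
  assume g: "g permutes S"
  have "perm_part (inv' g) (perm_part g P) = perm_part (inv' g \<circ> g) P" by (rule perm_part_comp[symmetric])
  also have "\<dots> = perm_part id P" using permutes_inv_o(2)[OF g] by (rule arg_cong)
  finally show ?thesis by (simp add: perm_part_id)
qed

lemma perm_part_inv2: "g permutes S \<Longrightarrow> perm_part g (perm_part (inv' g) P) = P"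
proof -
  assume g: "g permutes S"
  have "perm_part g (perm_part (inv' g) P) = perm_part (g \<circ> inv' g) P" by (rule perm_part_comp[symmetric])
  also have "\<dots> = perm_part id P" using permutes_inv_o(1)[OF g] by (rule arg_cong)
  finally show ?thesis by (simp add: perm_part_id)
qed

lemma refines_perm:
  assumes "refines P Q" shows "refines (perm_part g P) (perm_part g Q)"
  unfolding refines_def
proof
  fix B' assume "B' \<in> perm_part g P"
  then obtain B where B: "B \<in> P" "B' = g ` B" unfolding perm_part_def by auto
  obtain C where C: "C \<in> Q" "B \<subseteq> C" using assms B(1) unfolding refines_def by auto
  have "g ` C \<in> perm_part g Q" using C(1) unfolding perm_part_def by (rule imageI)
  moreover have "B' \<subseteq> g ` C" using B(2) C(2) by (simp add: image_mono)
  ultimately show "\<exists>C'\<in>perm_part g Q. B' \<subseteq> C'" by blast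
qed

lemma perm_part_top: "g permutes {1..n} \<Longrightarrow> perm_part g {{1..n}} = {{1..n}}"
  by (simp add: perm_part_def permutes_image)

lemma perm_part_sing: "g permutes {1..n} \<Longrightarrow> perm_part g ((\<lambda>i. {i}) ` {1..n}) = (\<lambda>i. {i}) ` {1..n}"
proof -
  assume g: "g permutes {1..n}"
  have "perm_part g ((\<lambda>i. {i}) ` {1..n}) = (\<lambda>i. {i}) ` (g ` {1..n})"
    unfolding perm_part_def by (simp add: image_image)
  then show ?thesis using permutes_image[OF g] by simp
qed

lemma perm_part_partition:
  assumes g: "g permutes A" and P: "partition_on A P"
  shows "partition_on A (perm_part g P)"
proof -
  have "partition_on (g ` A) ((`) g ` P - {{}})"
    using partition_on_inj_image[OF P, of g] permutes_inj_on[OF g] by blast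
  moreover have "(`) g ` P - {{}} = perm_part g P"
    using partition_onD3[OF P] unfolding perm_part_def by auto
  ultimately show ?thesis using permutes_image[OF g] by simp
qed

lemma refines_antisym:
  assumes "partition_on A P" "partition_on A Q" "refines P Q" "refines Q P"
  shows "P = Q"
  using Disjoint_Sets.refines_asym[of A P Q] assms
  unfolding Disjoint_Sets.refines_def Defs.refines_def by blast

lemma N_facts:
  assumes "subgroup G (sym_group n)"
  defines "N \<equiv> normalizer (sym_group n) G"
  shows "id \<in> N" and "\<And>g h. g \<in> N \<Longrightarrow> h \<in> N \<Longrightarrow> g \<circ> h \<in> N"
    and "\<And>g. g \<in> N \<Longrightarrow> inv' g \<in> N" and "\<And>g. g \<in> N \<Longrightarrow> g permutes {1..n}"
    and "\<And>g h. g \<in> N \<Longrightarrow> h \<in> G \<Longrightarrow> g \<circ> h \<circ> inv' g \<in> G"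
    and "\<And>g h. g \<in> N \<Longrightarrow> h \<in> G \<Longrightarrow> inv' g \<circ> h \<circ> g \<in> G"
    and "G \<subseteq> N"
proof -
  have NS: "subgroup N (sym_group n)" using normalizer_facts[OF assms(1)] N_def by simp
  show "id \<in> N" "\<And>g h. g \<in> N \<Longrightarrow> h \<in> N \<Longrightarrow> g \<circ> h \<in> N"
    "\<And>g. g \<in> N \<Longrightarrow> inv' g \<in> N" "\<And>g. g \<in> N \<Longrightarrow> g permutes {1..n}"
    using G_facts[OF NS] by auto
  show c: "\<And>g h. g \<in> N \<Longrightarrow> h \<in> G \<Longrightarrow> g \<circ> h \<circ> inv' g \<in> G"
    using normalizer_facts(3)[OF assms(1)] N_def by simp
  show "G \<subseteq> N" using normalizer_facts(2)[OF assms(1)] N_def by simp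
  fix g h assume g: "g \<in> N" and h: "h \<in> G"
  have "inv' g \<in> N" using G_facts(3)[OF NS g] .
  then have "inv' g \<circ> h \<circ> inv' (inv' g) \<in> G" using c h by blast
  moreover have "inv' (inv' g) = g" using permutes_inv_inv G_facts(4)[OF NS g] by blast
  ultimately show "inv' g \<circ> h \<circ> g \<in> G" by simp
qed


lemma perm_part_V:
  assumes sg: "subgroup G (sym_group n)" and g: "g \<in> normalizer (sym_group n) G"
    and P: "P \<in> {P \<in> Pi_poset n. \<forall>g\<in>G. perm_part g P = P}"
  shows "perm_part g P \<in> {P \<in> Pi_poset n. \<forall>g\<in>G. perm_part g P = P}"
proof -
  have gp: "g permutes {1..n}" using N_facts(4)[OF sg g] .
  have gi: "inv' g permutes {1..n}" using permutes_inv[OF gp] .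
  have Pp: "partition_on {1..n} P" "P \<noteq> {{1..n}}" "P \<noteq> (\<lambda>i. {i}) ` {1..n}"
    and Pf: "\<forall>h\<in>G. perm_part h P = P" using P unfolding Pi_poset_def by auto
  have "partition_on {1..n} (perm_part g P)" using perm_part_partition[OF gp Pp(1)] .
  moreover have "perm_part g P \<noteq> {{1..n}}"
  proof
    assume "perm_part g P = {{1..n}}"
    then have "perm_part (inv' g) (perm_part g P) = {{1..n}}" using perm_part_top[OF gi] by simp
    then show False using perm_part_inv[OF gp] Pp(2) by simp
  qed
  moreover have "perm_part g P \<noteq> (\<lambda>i. {i}) ` {1..n}"
  proof
    assume "perm_part g P = (\<lambda>i. {i}) ` {1..n}"
    then have "perm_part (inv' g) (perm_part g P) = (\<lambda>i. {i}) ` {1..n}" using perm_part_sing[OF gi] by simp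
    then show False using perm_part_inv[OF gp] Pp(3) by simp
  qed
  moreover have "\<forall>h\<in>G. perm_part h (perm_part g P) = perm_part g P"
  proof
    fix h assume h: "h \<in> G"
    have k: "inv' g \<circ> h \<circ> g \<in> G" using N_facts(6)[OF sg g h] .
    have "h \<circ> g = g \<circ> (inv' g \<circ> h \<circ> g)"
      using permutes_inv_o(1)[OF gp] by (simp add: o_assoc)
    then have "perm_part h (perm_part g P) = perm_part g (perm_part (inv' g \<circ> h \<circ> g) P)"
      by (metis perm_part_comp)
    also have "\<dots> = perm_part g P" using Pf k by simp
    finally show "perm_part h (perm_part g P) = perm_part g P" .
  qed
  ultimately show ?thesis unfolding Pi_poset_def by blast
qed

lemma absF_inst:
  assumes sg: "subgroup G (sym_group n)"
  shows "absF refines {P \<in> Pi_poset n. \<forall>g\<in>G. perm_part g P = P} (perm_part ` normalizer (sym_group n) G)"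
proof -
  define N where "N = normalizer (sym_group n) G"
  define V where "V = {P \<in> Pi_poset n. \<forall>g\<in>G. perm_part g P = P}"
  have Vp: "partition_on {1..n} P" if "P \<in> V" for P using that unfolding V_def Pi_poset_def by auto
  show ?thesis
    unfolding N_def[symmetric] V_def[symmetric]
  proof (rule absF.intro)
    show "finite V"
    proof (rule finite_subset)
      show "V \<subseteq> Pow (Pow {1..n})" using Vp unfolding partition_on_def by blast
    qed auto
    show "\<And>x. x \<in> V \<Longrightarrow> refines x x" unfolding refines_def by blast
    show "\<And>x y z. x \<in> V \<Longrightarrow> y \<in> V \<Longrightarrow> z \<in> V \<Longrightarrow> refines x y \<Longrightarrow> refines y z \<Longrightarrow> refines x z"
      unfolding refines_def by (meson order_trans)
    show "\<And>x y. x \<in> V \<Longrightarrow> y \<in> V \<Longrightarrow> refines x y \<Longrightarrow> refines y x \<Longrightarrow> x = y"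
      using refines_antisym Vp by blast
    show "\<And>f x. f \<in> perm_part ` N \<Longrightarrow> x \<in> V \<Longrightarrow> f x \<in> V"
      using perm_part_V[OF sg] unfolding N_def V_def by blast
    show "\<And>f. f \<in> perm_part ` N \<Longrightarrow> inj_on f V"
    proof -
      fix f assume "f \<in> perm_part ` N"
      then obtain g where g: "g \<in> N" "f = perm_part g" by auto
      have "g permutes {1..n}" using N_facts(4)[OF sg] g N_def by blast
      then show "inj_on f V" using g(2) perm_part_inv by (metis inj_on_inverseI)
    qed
    show "\<And>f x y. f \<in> perm_part ` N \<Longrightarrow> x \<in> V \<Longrightarrow> y \<in> V \<Longrightarrow> refines x y \<Longrightarrow> refines (f x) (f y)"
      using refines_perm by blast
    show "id \<in> perm_part ` N"
      using N_facts(1)[OF sg] perm_part_id N_def by (metis image_eqI)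
    show "\<And>f h. f \<in> perm_part ` N \<Longrightarrow> h \<in> perm_part ` N \<Longrightarrow> \<exists>k\<in>perm_part ` N. \<forall>x\<in>V. k x = f (h x)"
    proof -
      fix f h assume "f \<in> perm_part ` N" "h \<in> perm_part ` N"
      then obtain g1 g2 where "g1 \<in> N" "g2 \<in> N" "f = perm_part g1" "h = perm_part g2" by auto
      then show "\<exists>k\<in>perm_part ` N. \<forall>x\<in>V. k x = f (h x)"
        using N_facts(2)[OF sg] N_def perm_part_comp by (metis image_eqI)
    qed
    show "\<And>f. f \<in> perm_part ` N \<Longrightarrow> \<exists>k\<in>perm_part ` N. \<forall>x\<in>V. k (f x) = x"
    proof -
      fix f assume "f \<in> perm_part ` N"
      then obtain g where g: "g \<in> N" "f = perm_part g" by auto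
      have "g permutes {1..n}" using N_facts(4)[OF sg] g N_def by blast
      moreover have "inv' g \<in> N" using N_facts(3)[OF sg] g N_def by blast
      ultimately show "\<exists>k\<in>perm_part ` N. \<forall>x\<in>V. k (f x) = x"
        using g perm_part_inv by (metis image_eqI)
    qed
  qed
qed


lemma orb_facts:
  assumes sg: "subgroup G (sym_group n)"
  shows "i \<in> perm_orbit G i"
    and "\<And>g x. g \<in> G \<Longrightarrow> x \<in> perm_orbit G i \<Longrightarrow> g x \<in> perm_orbit G i"
    and "\<And>x. x \<in> perm_orbit G i \<Longrightarrow> perm_orbit G x = perm_orbit G i"
    and "i \<in> {1..n} \<Longrightarrow> perm_orbit G i \<subseteq> {1..n}"
proof -
  show "i \<in> perm_orbit G i" unfolding perm_orbit_def using G_facts(1)[OF sg] by (metis (mono_tags, lifting) id_apply mem_Collect_eq)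
  show "\<And>g x. g \<in> G \<Longrightarrow> x \<in> perm_orbit G i \<Longrightarrow> g x \<in> perm_orbit G i"
  proof -
    fix g x assume g: "g \<in> G" and x: "x \<in> perm_orbit G i"
    then obtain h where h: "h \<in> G" "x = h i" unfolding perm_orbit_def by auto
    have "g \<circ> h \<in> G" using G_facts(2)[OF sg g h(1)] .
    moreover have "g x = (g \<circ> h) i" using h by simp
    ultimately show "g x \<in> perm_orbit G i" unfolding perm_orbit_def by blast
  qed
  show "\<And>x. x \<in> perm_orbit G i \<Longrightarrow> perm_orbit G x = perm_orbit G i"
  proof -
    fix x assume x: "x \<in> perm_orbit G i"
    then obtain h where h: "h \<in> G" "x = h i" unfolding perm_orbit_def by auto
    show "perm_orbit G x = perm_orbit G i"
    proof
      show "perm_orbit G x \<subseteq> perm_orbit G i"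
      proof
        fix y assume "y \<in> perm_orbit G x"
        then obtain g where g: "g \<in> G" "y = g x" unfolding perm_orbit_def by auto
        have "g \<circ> h \<in> G" using G_facts(2)[OF sg g(1) h(1)] .
        moreover have "y = (g \<circ> h) i" using g h by simp
        ultimately show "y \<in> perm_orbit G i" unfolding perm_orbit_def by blast
      qed
      show "perm_orbit G i \<subseteq> perm_orbit G x"
      proof
        fix y assume "y \<in> perm_orbit G i"
        then obtain g where g: "g \<in> G" "y = g i" unfolding perm_orbit_def by auto
        have hp: "h permutes {1..n}" using G_facts(4)[OF sg h(1)] .
        have "g \<circ> inv' h \<in> G" using G_facts(2)[OF sg g(1) G_facts(3)[OF sg h(1)]] .
        moreover have "(g \<circ> inv' h) x = y" using g h permutes_inverses(2)[OF hp] by simp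
        ultimately show "y \<in> perm_orbit G x" unfolding perm_orbit_def by blast
      qed
    qed
  qed
  show "i \<in> {1..n} \<Longrightarrow> perm_orbit G i \<subseteq> {1..n}"
  proof
    fix x assume i: "i \<in> {1..n}" and "x \<in> perm_orbit G i"
    then obtain h where h: "h \<in> G" "x = h i" unfolding perm_orbit_def by auto
    have hp: "h permutes {1..n}" using G_facts(4)[OF sg h(1)] .
    show "x \<in> {1..n}" using h(2) permutes_in_image[OF hp] i by simp
  qed
qed

lemma iso_refl: "iso_Gsets G X X"
  unfolding iso_Gsets_def by (rule exI[of _ id]) simp

lemma iso_sym:
  assumes inv: "\<forall>g\<in>G. \<forall>x\<in>X. g x \<in> X" and iso: "iso_Gsets G X Y"
  shows "iso_Gsets G Y X"
proof -
  obtain f where f: "bij_betw f X Y" "\<forall>g\<in>G. \<forall>x\<in>X. f (g x) = g (f x)" using iso unfolding iso_Gsets_def by blast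
  define f' where "f' = inv_into X f"
  have "bij_betw f' Y X" using bij_betw_inv_into[OF f(1)] f'_def by simp
  moreover have "\<forall>g\<in>G. \<forall>y\<in>Y. f' (g y) = g (f' y)"
  proof (intro ballI)
    fix g y assume g: "g \<in> G" and y: "y \<in> Y"
    have x: "f' y \<in> X" "f (f' y) = y" using f(1) y f'_def
      by (auto simp: bij_betw_def inv_into_into f_inv_into_f)
    have "g (f' y) \<in> X" using inv g x by blast
    moreover have "f (g (f' y)) = g y" using f(2) g x by auto
    ultimately show "f' (g y) = g (f' y)" using f(1) f'_def
      by (metis bij_betw_def inv_into_f_f)
  qed
  ultimately show ?thesis unfolding iso_Gsets_def by blast
qed

lemma iso_trans:
  assumes "iso_Gsets G X Y" "iso_Gsets G Y Z"
  shows "iso_Gsets G X Z"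
proof -
  obtain f where f: "bij_betw f X Y" "\<forall>g\<in>G. \<forall>x\<in>X. f (g x) = g (f x)" using assms(1) unfolding iso_Gsets_def by blast
  obtain f2 where f2: "bij_betw f2 Y Z" "\<forall>g\<in>G. \<forall>x\<in>Y. f2 (g x) = g (f2 x)" using assms(2) unfolding iso_Gsets_def by blast
  have "bij_betw (f2 \<circ> f) X Z" using bij_betw_trans[OF f(1) f2(1)] .
  moreover have "\<forall>g\<in>G. \<forall>x\<in>X. (f2 \<circ> f) (g x) = g ((f2 \<circ> f) x)"
  proof (intro ballI)
    fix g x assume g: "g \<in> G" and x: "x \<in> X"
    have "f x \<in> Y" using f(1) x bij_betwE by blast
    then show "(f2 \<circ> f) (g x) = g ((f2 \<circ> f) x)" using f(2) f2(2) g x by simp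
  qed
  ultimately show ?thesis unfolding iso_Gsets_def by blast
qed

definition isoR :: "(nat \<Rightarrow> nat) set \<Rightarrow> nat \<Rightarrow> (nat \<times> nat) set" where
  "isoR G n = {(i,j). i \<in> {1..n} \<and> j \<in> {1..n} \<and> iso_Gsets G (perm_orbit G i) (perm_orbit G j)}"

lemma isoR_equiv:
  assumes sg: "subgroup G (sym_group n)"
  shows "equiv {1..n} (isoR G n)"
proof (rule equivI)
  show "isoR G n \<subseteq> {1..n} \<times> {1..n}" unfolding isoR_def by auto
  show "refl_on {1..n} (isoR G n)" unfolding refl_on_def isoR_def using iso_refl by blast
  show "sym (isoR G n)" unfolding sym_def isoR_def using iso_sym orb_facts(2)[OF sg] by blast
  show "trans (isoR G n)" unfolding trans_def isoR_def using iso_trans by blast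
qed


lemma orb_conj:
  assumes sg: "subgroup G (sym_group n)" and g: "g \<in> normalizer (sym_group n) G"
  shows "perm_orbit G (g i) = g ` perm_orbit G i"
proof
  have gp: "g permutes {1..n}" using N_facts(4)[OF sg g] .
  show "perm_orbit G (g i) \<subseteq> g ` perm_orbit G i"
  proof
    fix y assume "y \<in> perm_orbit G (g i)"
    then obtain h where h: "h \<in> G" "y = h (g i)" unfolding perm_orbit_def by auto
    have k: "inv' g \<circ> h \<circ> g \<in> G" using N_facts(6)[OF sg g h(1)] .
    have "g ((inv' g \<circ> h \<circ> g) i) = y" using h(2) permutes_inverses(1)[OF gp] by simp
    moreover have "(inv' g \<circ> h \<circ> g) i \<in> perm_orbit G i" using k unfolding perm_orbit_def by blast
    ultimately show "y \<in> g ` perm_orbit G i" by blast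
  qed
  show "g ` perm_orbit G i \<subseteq> perm_orbit G (g i)"
  proof
    fix y assume "y \<in> g ` perm_orbit G i"
    then obtain h where h: "h \<in> G" "y = g (h i)" unfolding perm_orbit_def by auto
    have k: "g \<circ> h \<circ> inv' g \<in> G" using N_facts(5)[OF sg g h(1)] .
    have "(g \<circ> h \<circ> inv' g) (g i) = y" using h(2) permutes_inverses(2)[OF gp] by simp
    then show "y \<in> perm_orbit G (g i)" using k unfolding perm_orbit_def by blast
  qed
qed

lemma iso_conj:
  assumes sg: "subgroup G (sym_group n)" and g: "g \<in> normalizer (sym_group n) G"
    and iso: "iso_Gsets G (perm_orbit G i) (perm_orbit G j)"
  shows "iso_Gsets G (perm_orbit G (g i)) (perm_orbit G (g j))"
proof -
  have gp: "g permutes {1..n}" using N_facts(4)[OF sg g] .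
  define X where "X = perm_orbit G i"
  define Y where "Y = perm_orbit G j"
  obtain f where f: "bij_betw f X Y" "\<forall>h\<in>G. \<forall>x\<in>X. f (h x) = h (f x)"
    using iso unfolding iso_Gsets_def X_def Y_def by blast
  have b1: "bij_betw (inv' g) (g ` X) X"
  proof (rule bij_betw_imageI)
    show "inj_on (inv' g) (g ` X)" using permutes_inj_on[OF permutes_inv[OF gp]] .
    show "inv' g ` g ` X = X" using permutes_inverses(2)[OF gp] by (simp add: image_image)
  qed
  have b3: "bij_betw g Y (g ` Y)" using permutes_inj_on[OF gp] by (rule inj_on_imp_bij_betw)
  have bij: "bij_betw (g \<circ> (f \<circ> inv' g)) (g ` X) (g ` Y)"
    using bij_betw_trans[OF bij_betw_trans[OF b1 f(1)] b3] .
  have eq: "\<forall>h\<in>G. \<forall>x\<in>g ` X. (g \<circ> (f \<circ> inv' g)) (h x) = h ((g \<circ> (f \<circ> inv' g)) x)"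
  proof (intro ballI)
    fix h x assume h: "h \<in> G" and x: "x \<in> g ` X"
    then obtain x0 where x0: "x0 \<in> X" "x = g x0" by auto
    have k: "inv' g \<circ> h \<circ> g \<in> G" using N_facts(6)[OF sg g h] .
    have "(g \<circ> (f \<circ> inv' g)) (h x) = g (f ((inv' g \<circ> h \<circ> g) x0))" using x0 by simp
    also have "\<dots> = g ((inv' g \<circ> h \<circ> g) (f x0))" using f(2) k x0(1) by metis
    also have "\<dots> = h (g (f x0))" using permutes_inverses(1)[OF gp] by simp
    also have "\<dots> = h ((g \<circ> (f \<circ> inv' g)) x)" using x0 permutes_inverses(2)[OF gp] by simp
    finally show "(g \<circ> (f \<circ> inv' g)) (h x) = h ((g \<circ> (f \<circ> inv' g)) x)" .
  qed
  have "perm_orbit G (g i) = g ` X" "perm_orbit G (g j) = g ` Y"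
    using orb_conj[OF sg g] X_def Y_def by auto
  then show ?thesis unfolding iso_Gsets_def using bij eq by metis
qed

lemma stab_iso:
  assumes sg: "subgroup G (sym_group n)" and st: "\<forall>g\<in>G. g i = i \<longleftrightarrow> g j = j"
  shows "iso_Gsets G (perm_orbit G i) (perm_orbit G j)"
proof -
  have key: "g i = h i \<longleftrightarrow> g j = h j" if g: "g \<in> G" and h: "h \<in> G" for g h
  proof -
    have hp: "h permutes {1..n}" using G_facts(4)[OF sg h] .
    have k: "inv' h \<circ> g \<in> G" using G_facts(2)[OF sg G_facts(3)[OF sg h] g] .
    have "g i = h i \<longleftrightarrow> (inv' h \<circ> g) i = i"
      using permutes_inverses[OF hp] by (metis comp_apply)
    also have "\<dots> \<longleftrightarrow> (inv' h \<circ> g) j = j" using st k by blast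
    also have "\<dots> \<longleftrightarrow> g j = h j"
      using permutes_inverses[OF hp] by (metis comp_apply)
    finally show ?thesis .
  qed
  define f where "f x = (SOME y. \<exists>g\<in>G. x = g i \<and> y = g j)" for x
  have fval: "f (g i) = g j" if g: "g \<in> G" for g
  proof -
    have "\<exists>y. \<exists>g'\<in>G. g i = g' i \<and> y = g' j" using g by blast
    then have "\<exists>g'\<in>G. g i = g' i \<and> f (g i) = g' j" unfolding f_def by (rule someI_ex)
    then show ?thesis using key g by metis
  qed
  have "bij_betw f (perm_orbit G i) (perm_orbit G j)"
    unfolding bij_betw_def
  proof
    show "inj_on f (perm_orbit G i)"
    proof (rule inj_onI)
      fix x y assume "x \<in> perm_orbit G i" "y \<in> perm_orbit G i" "f x = f y"
      then obtain g h where "g \<in> G" "h \<in> G" "x = g i" "y = h i" "f x = f y" unfolding perm_orbit_def by auto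
      then show "x = y" using fval key by metis
    qed
    show "f ` perm_orbit G i = perm_orbit G j"
    proof
      show "f ` perm_orbit G i \<subseteq> perm_orbit G j" unfolding perm_orbit_def using fval by auto
      show "perm_orbit G j \<subseteq> f ` perm_orbit G i"
      proof
        fix y assume "y \<in> perm_orbit G j"
        then obtain g where g: "g \<in> G" "y = g j" unfolding perm_orbit_def by auto
        then have "y = f (g i)" using fval by simp
        moreover have "g i \<in> perm_orbit G i" using g unfolding perm_orbit_def by blast
        ultimately show "y \<in> f ` perm_orbit G i" by blast
      qed
    qed
  qed
  moreover have "\<forall>h\<in>G. \<forall>x\<in>perm_orbit G i. f (h x) = h (f x)"
  proof (intro ballI)
    fix h x assume h: "h \<in> G" and "x \<in> perm_orbit G i"
    then obtain g where g: "g \<in> G" "x = g i" unfolding perm_orbit_def by auto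
    have hg: "h \<circ> g \<in> G" using G_facts(2)[OF sg h g(1)] .
    have "f (h x) = f ((h \<circ> g) i)" using g by simp
    also have "\<dots> = (h \<circ> g) j" using fval[OF hg] .
    also have "\<dots> = h (f x)" using fval[OF g(1)] g by simp
    finally show "f (h x) = h (f x)" .
  qed
  ultimately show ?thesis unfolding iso_Gsets_def by blast
qed


definition P0 :: "(nat \<Rightarrow> nat) set \<Rightarrow> nat \<Rightarrow> nat set set" where
  "P0 G n = {1..n} // isoR G n"

lemma quotient_image: "A // r = (\<lambda>x. r `` {x}) ` A"
  unfolding quotient_def by auto

lemma P0_fixed:
  assumes sg: "subgroup G (sym_group n)" and g: "g \<in> normalizer (sym_group n) G"
  shows "perm_part g (P0 G n) = P0 G n"
proof -
  define R where "R = isoR G n"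
  have Rg: "(h i, h j) \<in> R" if h: "h \<in> normalizer (sym_group n) G" and ij: "(i, j) \<in> R" for h i j
  proof -
    have hp: "h permutes {1..n}" using N_facts(4)[OF sg h] .
    have "i \<in> {1..n}" "j \<in> {1..n}" "iso_Gsets G (perm_orbit G i) (perm_orbit G j)"
      using ij unfolding R_def isoR_def by auto
    then show ?thesis using iso_conj[OF sg h] permutes_in_image[OF hp] unfolding R_def isoR_def by auto
  qed
  have gp: "g permutes {1..n}" using N_facts(4)[OF sg g] .
  have gi: "inv' g \<in> normalizer (sym_group n) G" using N_facts(3)[OF sg g] .
  have cls: "g ` (R `` {i}) = R `` {g i}" if i: "i \<in> {1..n}" for i
  proof
    show "g ` (R `` {i}) \<subseteq> R `` {g i}" using Rg[OF g] by auto
    show "R `` {g i} \<subseteq> g ` (R `` {i})"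
    proof
      fix z assume "z \<in> R `` {g i}"
      then have z: "(g i, z) \<in> R" by auto
      have "(inv' g (g i), inv' g z) \<in> R" using Rg[OF gi z] .
      then have "(i, inv' g z) \<in> R" using permutes_inverses(2)[OF gp] by simp
      moreover have "z = g (inv' g z)" using permutes_inverses(1)[OF gp] by simp
      ultimately show "z \<in> g ` (R `` {i})" by blast
    qed
  qed
  have "perm_part g (P0 G n) = (\<lambda>B. g ` B) ` ((\<lambda>i. R `` {i}) ` {1..n})"
    unfolding perm_part_def P0_def quotient_image R_def ..
  also have "\<dots> = (\<lambda>i. R `` {g i}) ` {1..n}"
    unfolding image_image using cls by (rule image_cong[OF refl]) 
  also have "\<dots> = (\<lambda>i. R `` {i}) ` (g ` {1..n})" by (simp add: image_image)
  also have "\<dots> = P0 G n" unfolding P0_def quotient_image R_def permutes_image[OF gp] ..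
  finally show ?thesis .
qed

lemma P0_in_V:
  assumes sg: "subgroup G (sym_group n)" and ni: "\<not> acts_isotypically n G"
  shows "P0 G n \<in> {P \<in> Pi_poset n. \<forall>g\<in>G. perm_part g P = P}"
proof -
  define R where "R = isoR G n"
  have eqv: "equiv {1..n} R" using isoR_equiv[OF sg] R_def by simp
  have part: "partition_on {1..n} (P0 G n)" unfolding P0_def R_def[symmetric] by (rule partition_on_quotient[OF eqv])
  obtain i j where ij: "i \<in> {1..n}" "j \<in> {1..n}" "\<not> iso_Gsets G (perm_orbit G i) (perm_orbit G j)"
    using ni unfolding acts_isotypically_def by blast
  have nR: "(i, j) \<notin> R" using ij unfolding R_def isoR_def by auto
  have Rclass: "R `` {k} \<in> P0 G n" if "k \<in> {1..n}" for k
    using that unfolding P0_def R_def quotient_def by auto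
  have "P0 G n \<noteq> {{1..n}}"
  proof
    assume "P0 G n = {{1..n}}"
    then have "R `` {i} = {1..n}" using Rclass[OF ij(1)] by auto
    then show False using nR ij(2) by auto
  qed
  moreover have "P0 G n \<noteq> (\<lambda>i. {i}) ` {1..n}"
  proof
    assume disc: "P0 G n = (\<lambda>i. {i}) ` {1..n}"
    have "\<exists>k\<in>{1..n}. \<exists>x. x \<in> perm_orbit G k \<and> x \<noteq> k"
    proof (rule ccontr)
      assume "\<not> ?thesis"
      then have oi: "perm_orbit G i = {i}" and oj: "perm_orbit G j = {j}"
        using ij orb_facts(1)[OF sg] by blast+
      have "iso_Gsets G {i} {j}"
        unfolding iso_Gsets_def
      proof (intro exI conjI)
        show "bij_betw (\<lambda>_. j) {i} {j}" by (simp add: bij_betw_def)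
        show "\<forall>g\<in>G. \<forall>x\<in>{i}. j = g j" using oj orb_facts(2)[OF sg, of _ j j] orb_facts(1)[OF sg, of j] by (metis singletonD)
      qed
      then show False using ij(3) oi oj by simp
    qed
    then obtain k x where k: "k \<in> {1..n}" "x \<in> perm_orbit G k" "x \<noteq> k" by blast
    have xn: "x \<in> {1..n}" using orb_facts(4)[OF sg k(1)] k(2) by blast
    have "(k, x) \<in> R" using k xn orb_facts(3)[OF sg k(2)] iso_refl unfolding R_def isoR_def by simp
    then have "x \<in> R `` {k}" by simp
    moreover have "k \<in> R `` {k}" using eqv k(1) unfolding equiv_def refl_on_def by auto
    moreover obtain m where "R `` {k} = {m}" using Rclass[OF k(1)] disc by auto
    ultimately show False using k(3) by auto
  qed
  moreover have "\<forall>g\<in>G. perm_part g (P0 G n) = P0 G n"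
    using P0_fixed[OF sg] N_facts(7)[OF sg] by blast
  ultimately show ?thesis using part unfolding Pi_poset_def by blast
qed


definition pmeet :: "nat set set \<Rightarrow> nat set set \<Rightarrow> nat set set" where
  "pmeet Q P = {B \<inter> C | B C. B \<in> Q \<and> C \<in> P \<and> B \<inter> C \<noteq> {}}"

lemma partition_same_block:
  assumes "partition_on A P" "B \<in> P" "B' \<in> P" "x \<in> B" "x \<in> B'"
  shows "B = B'"
  using assms unfolding partition_on_def disjoint_def by blast

lemma pmeet_partition:
  assumes Q: "partition_on A Q" and P: "partition_on A P"
  shows "partition_on A (pmeet Q P)"
proof (rule partition_onI)
  show "\<Union> (pmeet Q P) = A"
  proof
    show "\<Union> (pmeet Q P) \<subseteq> A" using Q unfolding pmeet_def partition_on_def by blast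
    show "A \<subseteq> \<Union> (pmeet Q P)"
    proof
      fix x assume "x \<in> A"
      then obtain B C where "B \<in> Q" "C \<in> P" "x \<in> B" "x \<in> C" using Q P unfolding partition_on_def by blast
      then show "x \<in> \<Union> (pmeet Q P)" unfolding pmeet_def by blast
    qed
  qed
  show "{} \<notin> pmeet Q P" unfolding pmeet_def by blast
  fix p q assume p: "p \<in> pmeet Q P" and q: "q \<in> pmeet Q P" and pq: "p \<noteq> q"
  obtain B C where BC: "B \<in> Q" "C \<in> P" "p = B \<inter> C" using p unfolding pmeet_def by blast
  obtain B' C' where BC': "B' \<in> Q" "C' \<in> P" "q = B' \<inter> C'" using q unfolding pmeet_def by blast
  show "disjnt p q"
  proof (rule ccontr)
    assume "\<not> disjnt p q"
    then obtain x where "x \<in> p" "x \<in> q" unfolding disjnt_def by blast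
    then have "B = B'" "C = C'" using partition_same_block[OF Q] partition_same_block[OF P] BC BC' by blast+
    then show False using pq BC BC' by simp
  qed
qed

lemma pmeet_ref1: "refines (pmeet Q P) Q"
  unfolding refines_def pmeet_def by blast

lemma pmeet_ref2: "refines (pmeet Q P) P"
  unfolding refines_def pmeet_def by blast

lemma pmeet_glb:
  assumes "{} \<notin> Y" "refines Y Q" "refines Y P"
  shows "refines Y (pmeet Q P)"
  unfolding refines_def
proof
  fix D assume D: "D \<in> Y"
  obtain B where B: "B \<in> Q" "D \<subseteq> B" using assms(2) D unfolding refines_def by blast
  obtain C where C: "C \<in> P" "D \<subseteq> C" using assms(3) D unfolding refines_def by blast
  have "D \<noteq> {}" using assms(1) D by blast
  then have "B \<inter> C \<in> pmeet Q P" using B C unfolding pmeet_def by blast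
  then show "\<exists>E\<in>pmeet Q P. D \<subseteq> E" using B C by blast
qed

lemma pmeet_memI: "B \<in> Q \<Longrightarrow> C \<in> P \<Longrightarrow> B \<inter> C \<noteq> {} \<Longrightarrow> B \<inter> C \<in> pmeet Q P"
  unfolding pmeet_def by blast

lemma pmeet_memE: "X \<in> pmeet Q P \<Longrightarrow> (\<And>B C. B \<in> Q \<Longrightarrow> C \<in> P \<Longrightarrow> B \<inter> C \<noteq> {} \<Longrightarrow> X = B \<inter> C \<Longrightarrow> thesis) \<Longrightarrow> thesis"
  unfolding pmeet_def by blast

lemma perm_part_memI: "B \<in> P \<Longrightarrow> g ` B \<in> perm_part g P"
  unfolding perm_part_def by (rule imageI)

lemma perm_part_memE: "X \<in> perm_part g P \<Longrightarrow> (\<And>B. B \<in> P \<Longrightarrow> X = g ` B \<Longrightarrow> thesis) \<Longrightarrow> thesis"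
  unfolding perm_part_def by blast

lemma pmeet_perm:
  assumes g: "inj g"
  shows "perm_part g (pmeet Q P) = pmeet (perm_part g Q) (perm_part g P)"
proof
  show "perm_part g (pmeet Q P) \<subseteq> pmeet (perm_part g Q) (perm_part g P)"
  proof
    fix X assume "X \<in> perm_part g (pmeet Q P)"
    then obtain Y where Y: "Y \<in> pmeet Q P" "X = g ` Y" by (rule perm_part_memE)
    from Y(1) obtain B C where BC: "B \<in> Q" "C \<in> P" "B \<inter> C \<noteq> {}" "Y = B \<inter> C" by (rule pmeet_memE)
    have X: "X = g ` B \<inter> g ` C" using Y(2) BC(4) image_Int[OF g] by simp
    have ne: "g ` B \<inter> g ` C \<noteq> {}"
    proof -
      obtain x where "x \<in> B" "x \<in> C" using BC(3) by blast
      then have "g x \<in> g ` B \<inter> g ` C" by blast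
      then show ?thesis by blast
    qed
    show "X \<in> pmeet (perm_part g Q) (perm_part g P)"
      unfolding X by (rule pmeet_memI[OF perm_part_memI[OF BC(1)] perm_part_memI[OF BC(2)] ne])
  qed
  show "pmeet (perm_part g Q) (perm_part g P) \<subseteq> perm_part g (pmeet Q P)"
  proof
    fix X assume "X \<in> pmeet (perm_part g Q) (perm_part g P)"
    then obtain B' C' where BC0: "B' \<in> perm_part g Q" "C' \<in> perm_part g P" "B' \<inter> C' \<noteq> {}" "X = B' \<inter> C'"
      by (rule pmeet_memE)
    from BC0(1) obtain B where B: "B \<in> Q" "B' = g ` B" by (rule perm_part_memE)
    from BC0(2) obtain C where C: "C \<in> P" "C' = g ` C" by (rule perm_part_memE)
    have X: "X = g ` (B \<inter> C)" using BC0(4) B(2) C(2) image_Int[OF g] by simp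
    have "B \<inter> C \<noteq> {}" using BC0(3) B(2) C(2) image_Int[OF g] by (metis image_empty)
    then show "X \<in> perm_part g (pmeet Q P)"
      unfolding X by (rule perm_part_memI[OF pmeet_memI[OF B(1) C(1)]])
  qed
qed


lemma meet_in_V:
  assumes sg: "subgroup G (sym_group n)" and ni: "\<not> acts_isotypically n G"
    and Q: "Q \<in> {P \<in> Pi_poset n. \<forall>g\<in>G. perm_part g P = P}"
  shows "pmeet Q (P0 G n) \<in> {P \<in> Pi_poset n. \<forall>g\<in>G. perm_part g P = P}"
proof -
  define R where "R = isoR G n"
  have eqv: "equiv {1..n} R" using isoR_equiv[OF sg] R_def by simp
  have P0V: "P0 G n \<in> {P \<in> Pi_poset n. \<forall>g\<in>G. perm_part g P = P}" by (rule P0_in_V[OF sg ni])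
  have P0p: "partition_on {1..n} (P0 G n)" "P0 G n \<noteq> {{1..n}}" and P0f: "\<forall>g\<in>G. perm_part g (P0 G n) = P0 G n"
    using P0V unfolding Pi_poset_def by auto
  have Qp: "partition_on {1..n} Q" "Q \<noteq> {{1..n}}" "Q \<noteq> (\<lambda>i. {i}) ` {1..n}" and Qf: "\<forall>g\<in>G. perm_part g Q = Q"
    using Q unfolding Pi_poset_def by auto
  have part: "partition_on {1..n} (pmeet Q (P0 G n))" by (rule pmeet_partition[OF Qp(1) P0p(1)])
  have fixed: "\<forall>h\<in>G. perm_part h (pmeet Q (P0 G n)) = pmeet Q (P0 G n)"
  proof
    fix h assume h: "h \<in> G"
    have "inj h" using permutes_inj[OF G_facts(4)[OF sg h]] .
    then show "perm_part h (pmeet Q (P0 G n)) = pmeet Q (P0 G n)"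
      using pmeet_perm Qf P0f h by simp
  qed
  have ntop: "pmeet Q (P0 G n) \<noteq> {{1..n}}"
  proof
    assume eq: "pmeet Q (P0 G n) = {{1..n}}"
    have "{1..n} \<in> pmeet Q (P0 G n)" using eq by simp
    then obtain B C where BC: "B \<in> Q" "C \<in> P0 G n" "{1..n} = B \<inter> C" by (rule pmeet_memE)
    have "C \<subseteq> {1..n}" using P0p(1) BC(2) unfolding partition_on_def by blast
    then have C: "C = {1..n}" using BC(3) by blast
    have "P0 G n = {C}"
    proof
      show "{C} \<subseteq> P0 G n" using BC(2) by simp
      show "P0 G n \<subseteq> {C}"
      proof
        fix C' assume C': "C' \<in> P0 G n"
        have "C' \<noteq> {}" using partition_onD3[OF P0p(1)] C' by blast
        then obtain x where x: "x \<in> C'" by blast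
        have "x \<in> {1..n}" using P0p(1) C' x unfolding partition_on_def by blast
        then have "x \<in> C" using C by simp
        then show "C' \<in> {C}" using partition_same_block[OF P0p(1) C' BC(2) x] by simp
      qed
    qed
    then show False using C P0p(2) by simp
  qed
  have nsing: "pmeet Q (P0 G n) \<noteq> (\<lambda>i. {i}) ` {1..n}"
  proof
    assume disc: "pmeet Q (P0 G n) = (\<lambda>i. {i}) ` {1..n}"
    have "\<exists>B\<in>Q. \<exists>i j. i \<in> B \<and> j \<in> B \<and> i \<noteq> j"
    proof (rule ccontr)
      assume no: "\<not> ?thesis"
      have "Q = (\<lambda>i. {i}) ` {1..n}"
      proof
        show "Q \<subseteq> (\<lambda>i. {i}) ` {1..n}"
        proof
          fix B assume B: "B \<in> Q"
          have "B \<noteq> {}" using partition_onD3[OF Qp(1)] B by blast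
          then obtain x where x: "x \<in> B" by blast
          have "B = {x}" using no B x by blast
          moreover have "x \<in> {1..n}" using Qp(1) B x unfolding partition_on_def by blast
          ultimately show "B \<in> (\<lambda>i. {i}) ` {1..n}" by blast
        qed
        show "(\<lambda>i. {i}) ` {1..n} \<subseteq> Q"
        proof
          fix X assume "X \<in> (\<lambda>i. {i}) ` {1..n}"
          then obtain x where x: "x \<in> {1..n}" "X = {x}" by blast
          then obtain B where B: "B \<in> Q" "x \<in> B" using Qp(1) unfolding partition_on_def by blast
          have "B = {x}" using no B by blast
          then show "X \<in> Q" using B x by simp
        qed
      qed
      then show False using Qp(3) by simp
    qed
    then obtain B i j where Bij: "B \<in> Q" "i \<in> B" "j \<in> B" "i \<noteq> j" by blast
    have Bsub: "B \<subseteq> {1..n}" using Qp(1) Bij(1) unfolding partition_on_def by blast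
    have same: "x = y" if xy: "x \<in> B" "y \<in> B" "(x, y) \<in> R" for x y
    proof -
      have xn: "x \<in> {1..n}" using Bsub xy by blast
      have cls: "R `` {x} \<in> P0 G n" using xn unfolding P0_def R_def quotient_def by blast
      have "x \<in> R `` {x}" using eqv xn unfolding equiv_def refl_on_def by blast
      then have "x \<in> B \<inter> R `` {x}" using xy by blast
      then have ne: "B \<inter> R `` {x} \<noteq> {}" by blast
      have "B \<inter> R `` {x} \<in> pmeet Q (P0 G n)" by (rule pmeet_memI[OF Bij(1) cls ne])
      then obtain m where m: "B \<inter> R `` {x} = {m}" using disc by auto
      have "y \<in> B \<inter> R `` {x}" using xy by blast
      then have "y = m" using m by simp
      moreover have "x = m" using m \<open>x \<in> B \<inter> R `` {x}\<close> by simp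
      ultimately show "x = y" by simp
    qed
    have stab: "g x = x \<longleftrightarrow> g ` B = B" if x: "x \<in> B" and g: "g \<in> G" for x g
    proof
      assume gx: "g x = x"
      have "g ` B \<in> perm_part g Q" by (rule perm_part_memI[OF Bij(1)])
      then have gB: "g ` B \<in> Q" using Qf g by simp
      have "x \<in> g ` B" using gx x by (metis imageI)
      then show "g ` B = B" using partition_same_block[OF Qp(1) gB Bij(1)] x by blast
    next
      assume gB: "g ` B = B"
      have gx: "g x \<in> B" using gB x by blast
      have xn: "x \<in> {1..n}" "g x \<in> {1..n}" using Bsub x gx by blast+
      have "g x \<in> perm_orbit G x" using orb_facts(2)[OF sg g orb_facts(1)[OF sg]] .
      then have "perm_orbit G (g x) = perm_orbit G x" by (rule orb_facts(3)[OF sg])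
      then have "(x, g x) \<in> R" using xn iso_refl unfolding R_def isoR_def by simp
      then show "g x = x" using same[OF x gx] by simp
    qed
    have "\<forall>g\<in>G. g i = i \<longleftrightarrow> g j = j" using stab Bij by blast
    then have "iso_Gsets G (perm_orbit G i) (perm_orbit G j)" by (rule stab_iso[OF sg])
    then have "(i, j) \<in> R" using Bsub Bij unfolding R_def isoR_def by blast
    then show False using same Bij by blast
  qed
  show ?thesis using part ntop nsing fixed unfolding Pi_poset_def by blast
qed


theorem lemma6p3:
  fixes n :: nat and G :: "(nat \<Rightarrow> nat) set"
  assumes "subgroup G (sym_group n)"
    and "\<not> acts_isotypically n G"
  shows "equiv_collapsible n G (fixed_order_complex n G)"
proof -
  note sg = assms(1) and ni = assms(2)
  define N where "N = normalizer (sym_group n) G"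
  define V where "V = {P \<in> Pi_poset n. \<forall>g\<in>G. perm_part g P = P}"
  define F where "F = perm_part ` N"
  interpret absF refines V F using absF_inst[OF sg] unfolding V_def F_def N_def .
  have P0V: "P0 G n \<in> V" using P0_in_V[OF sg ni] unfolding V_def .
  have Vp: "partition_on {1..n} P" if "P \<in> V" for P using that unfolding V_def Pi_poset_def by auto
  have coll: "(gstep F)\<^sup>*\<^sup>* (cplx refines V) {{P0 G n}}"
  proof (rule collapse_all[of "P0 G n" "\<lambda>x. pmeet x (P0 G n)"])
    show "P0 G n \<in> V" by (rule P0V)
    show "\<forall>f\<in>F. f (P0 G n) = P0 G n" using P0_fixed[OF sg] unfolding F_def N_def by blast
    show "\<And>x. x \<in> V \<Longrightarrow> \<not> refines x (P0 G n) \<Longrightarrow> pmeet x (P0 G n) \<in> V \<and> refines (pmeet x (P0 G n)) x \<and>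
            refines (pmeet x (P0 G n)) (P0 G n) \<and>
            (\<forall>y\<in>V. refines y x \<longrightarrow> refines y (P0 G n) \<longrightarrow> refines y (pmeet x (P0 G n)))"
    proof -
      fix x assume x: "x \<in> V"
      have "pmeet x (P0 G n) \<in> V" using meet_in_V[OF sg ni] x unfolding V_def by blast
      moreover have "\<forall>y\<in>V. refines y x \<longrightarrow> refines y (P0 G n) \<longrightarrow> refines y (pmeet x (P0 G n))"
        using pmeet_glb Vp partition_onD3 by blast
      ultimately show "pmeet x (P0 G n) \<in> V \<and> refines (pmeet x (P0 G n)) x \<and>
            refines (pmeet x (P0 G n)) (P0 G n) \<and>
            (\<forall>y\<in>V. refines y x \<longrightarrow> refines y (P0 G n) \<longrightarrow> refines y (pmeet x (P0 G n)))"
        using pmeet_ref1 pmeet_ref2 by blast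
    qed
    show "\<And>f x. f \<in> F \<Longrightarrow> x \<in> V \<Longrightarrow> \<not> refines x (P0 G n) \<Longrightarrow> f (pmeet x (P0 G n)) = pmeet (f x) (P0 G n)"
    proof -
      fix f x assume f: "f \<in> F"
      then obtain g where g: "g \<in> N" "f = perm_part g" unfolding F_def by blast
      have "inj g" using permutes_inj[OF N_facts(4)[OF sg]] g N_def by blast
      then show "f (pmeet x (P0 G n)) = pmeet (f x) (P0 G n)"
        using pmeet_perm P0_fixed[OF sg] g N_def by simp
    qed
  qed
  have K: "fixed_order_complex n G = cplx refines V"
    unfolding fixed_order_complex_def cplx_def V_def is_chain_def by blast
  have orb: "weyl_orbit n G s = orbF F s" for s
    unfolding weyl_orbit_def orbF_def F_def perm_simplex_def
    using weyl_elems[OF sg] N_def by blast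
  have S: "elem_equiv_collapse n G = gstep F"
    unfolding elem_equiv_collapse_def gstep_def orb by (intro ext) blast
  show ?thesis unfolding equiv_collapsible_def K S using coll by blast
qed

end
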